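(* Let $r(t)\in\mathbb{R}^k$ be an RC process, let $t\in\mathbb{Z}$, $\sigma\in\Sigma$, and let $z$ be a real random variable that is a finite linear combination of the coordinates of the random vectors $z^r_v(t)$, $v\in L$. Then $E[z^2u_\sigma(t)^2]\le p_\sigma E[z^2]$.
   Context: Setting (RC framework). All random variables are on one probability space. $\Sigma$ is a finite alphabet, $\Sigma^*$ the finite words (empty word $\epsilon$), $\Sigma^+=\Sigma^*\setminus\{\epsilon\}$, $|w|$ the length. Fix reals $p_\sigma>0$ ($\sigma\in\Sigma$); $p_\epsilon=1$, $p_{\sigma_1\cdots\sigma_k}=p_{\sigma_1}\cdots p_{\sigma_k}$. Input processes are scalar processes $\{u_\sigma(t)\}_{t\in\mathbb{Z}}$, $\sigma\in\Sigma$, such that $\sum_\sigma\alpha_\sigma u_\sigma(t)=1$ for some real constants $\alpha_\sigma$, and all first and second moments of $u_w(t)$ are finite, where for $w=\sigma_1\cdots\sigma_k\in\Sigma^+$, $u_w(t)=u_{\sigma_1}(t-k+1)u_{\sigma_2}(t-k+2)\cdots u_{\sigma_k}(t)$. For a process $r(t)\in\mathbb{R}^k$ and $w\in\Sigma^+$ set $z^r_w(t)=r(t-|w|)u_w(t-1)/\sqrt{p_w}$. A fixed set $L\subseteq\Sigma^+$ of admissible words satisfies: $\Sigma\subseteq L$; $u_w(t)=0$ a.s. for $w\notin L$; and there is $S\subseteq\Sigma\times\Sigma$ such that a word $\sigma_1\cdots\sigma_k$ with $k>1$ is in $L$ iff $(\sigma_i,\sigma_{i+1})\in S$ for all $i$.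 A process $r(t)\in\mathbb{R}^k$ is RC (recursive covariance) if: (1) $E[r(t)]=0$, $E[z^r_w(t)]=0$, and $E[r(t)z^r_w(t)^T]$, $E[z^r_w(t)z^r_v(t)^T]$ are finite and independent of $t$ for all $w,v\in\Sigma^+$; write $T^r_{w,v}=E[z^r_w(t)z^r_v(t)^T]$, $\Lambda^r_w=E[r(t)z^r_w(t)^T]$; (2) for $w,v\in\Sigma^+$, $\sigma,\sigma'\in\Sigma$: $T^r_{\sigma,\sigma'}=0$ if $\sigma\neq\sigma'$; $T^r_{w\sigma,v\sigma'}=0$ if $\sigma\ne\sigma'$ and $T^r_{w\sigma,v\sigma}=T^r_{w,v}$ if $w\sigma\in L$ or $v\sigma\in L$; $T^r_{w\sigma,\sigma'}=0$ if $\sigma\neq\sigma'$ and $T^r_{w\sigma,\sigma}=(\Lambda^r_w)^T$; (3) $T^r_{w,v}=0$ if $w\notin L$ or $v\notin L$, and for $\sigma\in\Sigma$, if $w\sigma\in L$ and $v\sigma\notin L$ then $T^r_{v,w}=0$ and $T^r_{w,v}=0$. *)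

theory Defs
  imports "HOL-Probability.Probability"
begin

(* Conventions.
   - Alphabet Sigma = UNIV of a finite type 's; words are lists 's list,
     the word sigma_1 ... sigma_k is the list [sigma_1, ..., sigma_k]; Sigma^+ = nonempty lists.
   - Probability space: M with prob_space M; random variables are functions 'a => real.
   - Input processes: u sigma t  (the scalar random variable u_sigma(t)).
   - A process r(t) in R^k is given coordinatewise: r t i, i :: 'k (finite index type, k = CARD('k)). *)

definition uw :: "('s \<Rightarrow> int \<Rightarrow> 'a \<Rightarrow> real) \<Rightarrow> 's list \<Rightarrow> int \<Rightarrow> 'a \<Rightarrow> real" where
  "uw u w t x = (\<Prod>j<length w. u (w ! j) (t - int (length w) + 1 + int j) x)"

definition pw :: "('s \<Rightarrow> real) \<Rightarrow> 's list \<Rightarrow> real" where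
  "pw p w = prod_list (map p w)"

definition zr :: "('s \<Rightarrow> int \<Rightarrow> 'a \<Rightarrow> real) \<Rightarrow> ('s \<Rightarrow> real) \<Rightarrow> (int \<Rightarrow> 'k \<Rightarrow> 'a \<Rightarrow> real)
    \<Rightarrow> 's list \<Rightarrow> int \<Rightarrow> 'k \<Rightarrow> 'a \<Rightarrow> real" where
  "zr u p r w t i x = r (t - int (length w)) i x * uw u w (t - 1) x / sqrt (pw p w)"

definition input_processes :: "'a measure \<Rightarrow> ('s::finite \<Rightarrow> int \<Rightarrow> 'a \<Rightarrow> real) \<Rightarrow> bool" where
  "input_processes M u \<longleftrightarrow>
     (\<forall>\<sigma> t. u \<sigma> t \<in> borel_measurable M) \<and>
     (\<exists>\<alpha> :: 's \<Rightarrow> real. \<forall>t. AE x in M. (\<Sum>\<sigma>\<in>UNIV. \<alpha> \<sigma> * u \<sigma> t x) = 1) \<and>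
     (\<forall>w t. w \<noteq> [] \<longrightarrow> integrable M (uw u w t) \<and> integrable M (\<lambda>x. (uw u w t x)\<^sup>2))"

definition admissible_words :: "'a measure \<Rightarrow> ('s \<Rightarrow> int \<Rightarrow> 'a \<Rightarrow> real) \<Rightarrow> 's list set \<Rightarrow> bool" where
  "admissible_words M u L \<longleftrightarrow>
     (\<forall>w\<in>L. w \<noteq> []) \<and>
     (\<forall>\<sigma>. [\<sigma>] \<in> L) \<and>
     (\<forall>w t. w \<noteq> [] \<and> w \<notin> L \<longrightarrow> (AE x in M. uw u w t x = 0)) \<and>
     (\<exists>S. \<forall>w. length w > 1 \<longrightarrow>
          (w \<in> L \<longleftrightarrow> (\<forall>i. Suc i < length w \<longrightarrow> (w ! i, w ! Suc i) \<in> S)))"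

(* T^r_{w,v} (entry i j) and Lambda^r_w (entry i j), evaluated at time 0
   (they are independent of t by condition (1) of RC) *)
definition Tm :: "'a measure \<Rightarrow> ('s \<Rightarrow> int \<Rightarrow> 'a \<Rightarrow> real) \<Rightarrow> ('s \<Rightarrow> real) \<Rightarrow> (int \<Rightarrow> 'k \<Rightarrow> 'a \<Rightarrow> real)
    \<Rightarrow> 's list \<Rightarrow> 's list \<Rightarrow> 'k \<Rightarrow> 'k \<Rightarrow> real" where
  "Tm M u p r w v i j = (\<integral>x. zr u p r w 0 i x * zr u p r v 0 j x \<partial>M)"

definition Lam :: "'a measure \<Rightarrow> ('s \<Rightarrow> int \<Rightarrow> 'a \<Rightarrow> real) \<Rightarrow> ('s \<Rightarrow> real) \<Rightarrow> (int \<Rightarrow> 'k \<Rightarrow> 'a \<Rightarrow> real)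
    \<Rightarrow> 's list \<Rightarrow> 'k \<Rightarrow> 'k \<Rightarrow> real" where
  "Lam M u p r w i j = (\<integral>x. r 0 i x * zr u p r w 0 j x \<partial>M)"

definition RC :: "'a measure \<Rightarrow> ('s \<Rightarrow> int \<Rightarrow> 'a \<Rightarrow> real) \<Rightarrow> ('s \<Rightarrow> real) \<Rightarrow> 's list set
    \<Rightarrow> (int \<Rightarrow> 'k \<Rightarrow> 'a \<Rightarrow> real) \<Rightarrow> bool" where
  "RC M u p L r \<longleftrightarrow>
     \<comment> \<open>(1)\<close>
     (\<forall>t i. integrable M (r t i) \<and> (\<integral>x. r t i x \<partial>M) = 0) \<and>
     (\<forall>w t i. w \<noteq> [] \<longrightarrow> integrable M (zr u p r w t i) \<and> (\<integral>x. zr u p r w t i x \<partial>M) = 0) \<and>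
     (\<forall>w t i j. w \<noteq> [] \<longrightarrow>
        integrable M (\<lambda>x. r t i x * zr u p r w t j x) \<and>
        (\<integral>x. r t i x * zr u p r w t j x \<partial>M) = Lam M u p r w i j) \<and>
     (\<forall>w v t i j. w \<noteq> [] \<and> v \<noteq> [] \<longrightarrow>
        integrable M (\<lambda>x. zr u p r w t i x * zr u p r v t j x) \<and>
        (\<integral>x. zr u p r w t i x * zr u p r v t j x \<partial>M) = Tm M u p r w v i j) \<and>
     \<comment> \<open>(2)\<close>
     (\<forall>\<sigma> \<sigma>' i j. \<sigma> \<noteq> \<sigma>' \<longrightarrow> Tm M u p r [\<sigma>] [\<sigma>'] i j = 0) \<and>
     (\<forall>w v \<sigma> \<sigma>' i j. w \<noteq> [] \<and> v \<noteq> [] \<and> \<sigma> \<noteq> \<sigma>' \<longrightarrow>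
        Tm M u p r (w @ [\<sigma>]) (v @ [\<sigma>']) i j = 0) \<and>
     (\<forall>w v \<sigma> i j. w \<noteq> [] \<and> v \<noteq> [] \<and> (w @ [\<sigma>] \<in> L \<or> v @ [\<sigma>] \<in> L) \<longrightarrow>
        Tm M u p r (w @ [\<sigma>]) (v @ [\<sigma>]) i j = Tm M u p r w v i j) \<and>
     (\<forall>w \<sigma> \<sigma>' i j. w \<noteq> [] \<and> \<sigma> \<noteq> \<sigma>' \<longrightarrow> Tm M u p r (w @ [\<sigma>]) [\<sigma>'] i j = 0) \<and>
     (\<forall>w \<sigma> i j. w \<noteq> [] \<longrightarrow> Tm M u p r (w @ [\<sigma>]) [\<sigma>] i j = Lam M u p r w j i) \<and>
     \<comment> \<open>(3)\<close>
     (\<forall>w v i j. w \<noteq> [] \<and> v \<noteq> [] \<and> (w \<notin> L \<or> v \<notin> L) \<longrightarrow> Tm M u p r w v i j = 0) \<and>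
     (\<forall>w v \<sigma> i j. w \<noteq> [] \<and> v \<noteq> [] \<and> w @ [\<sigma>] \<in> L \<and> v @ [\<sigma>] \<notin> L \<longrightarrow>
        Tm M u p r v w i j = 0 \<and> Tm M u p r w v i j = 0)"

end

theory Submission
  imports Defs
begin

lemma bil:
  fixes f :: "'b \<Rightarrow> 'a \<Rightarrow> real"
  assumes "finite G" "finite H" "\<forall>g\<in>G. \<forall>h\<in>H. integrable M (\<lambda>x. f g x * f h x)"
  shows "integrable M (\<lambda>x. (\<Sum>g\<in>G. a g * f g x) * (\<Sum>h\<in>H. b h * f h x))"
    and "(\<integral>x. (\<Sum>g\<in>G. a g * f g x) * (\<Sum>h\<in>H. b h * f h x) \<partial>M)
          = (\<Sum>g\<in>G. \<Sum>h\<in>H. a g * b h * (\<integral>x. f g x * f h x \<partial>M))"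
proof -
  have eq: "(\<lambda>x. (\<Sum>g\<in>G. a g * f g x) * (\<Sum>h\<in>H. b h * f h x))
      = (\<lambda>x. \<Sum>g\<in>G. \<Sum>h\<in>H. a g * b h * (f g x * f h x))"
    by (auto simp: sum_product algebra_simps)
  show "integrable M (\<lambda>x. (\<Sum>g\<in>G. a g * f g x) * (\<Sum>h\<in>H. b h * f h x))"
    unfolding eq using assms by (auto intro!: Bochner_Integration.integrable_sum Bochner_Integration.integrable_mult_right)
  show "(\<integral>x. (\<Sum>g\<in>G. a g * f g x) * (\<Sum>h\<in>H. b h * f h x) \<partial>M)
          = (\<Sum>g\<in>G. \<Sum>h\<in>H. a g * b h * (\<integral>x. f g x * f h x \<partial>M))"
    unfolding eq using assms
    by (simp add: Bochner_Integration.integral_sum Bochner_Integration.integrable_sum)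
qed

lemma int_cong_helper: "integrable M g \<Longrightarrow> (\<And>x. x \<in> space M \<Longrightarrow> f x = g x) \<Longrightarrow> integrable M f"
  by (metis Bochner_Integration.integrable_cong)

lemma uw_snoc: "uw u (w @ [\<sigma>]) t x = uw u w (t - 1) x * u \<sigma> t x"
  unfolding uw_def
  by (auto simp: prod.lessThan_Suc nth_append algebra_simps intro!: prod.cong)

lemma zr_snoc: "zr u p r (w @ [\<sigma>]) (t + 1) i x = zr u p r w t i x * u \<sigma> t x / sqrt (p \<sigma>)"
  unfolding zr_def by (simp add: uw_snoc pw_def real_sqrt_mult algebra_simps)

theorem mainTheorem2:
  fixes M :: "'a measure"
    and u :: "'s::finite \<Rightarrow> int \<Rightarrow> 'a \<Rightarrow> real"
    and p :: "'s \<Rightarrow> real"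
    and L :: "'s list set"
    and r :: "int \<Rightarrow> 'k::finite \<Rightarrow> 'a \<Rightarrow> real"
    and t :: int and \<sigma> :: 's
    and z :: "'a \<Rightarrow> real"
    and F :: "('s list \<times> 'k) set" and c :: "'s list \<Rightarrow> 'k \<Rightarrow> real"
  assumes "prob_space M"
    and "\<forall>\<tau>. p \<tau> > 0"
    and "input_processes M u"
    and "admissible_words M u L"
    and "RC M u p L r"
    and "finite F" and "\<forall>(v, i)\<in>F. v \<in> L"
    and "\<forall>x\<in>space M. z x = (\<Sum>(v, i)\<in>F. c v i * zr u p r v t i x)"
  shows "(\<integral>\<^sup>+x. ennreal ((z x)\<^sup>2 * (u \<sigma> t x)\<^sup>2) \<partial>M)
           \<le> ennreal (p \<sigma>) * (\<integral>\<^sup>+x. ennreal ((z x)\<^sup>2) \<partial>M)"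
proof -
  have R4: "\<And>w v t i j. w \<noteq> [] \<Longrightarrow> v \<noteq> [] \<Longrightarrow>
        integrable M (\<lambda>x. zr u p r w t i x * zr u p r v t j x) \<and>
        (\<integral>x. zr u p r w t i x * zr u p r v t j x \<partial>M) = Tm M u p r w v i j"
    using assms(5)[unfolded RC_def, THEN conjunct2, THEN conjunct2, THEN conjunct2, THEN conjunct1] by blast
  have R7: "\<And>w v \<sigma> i j. w \<noteq> [] \<Longrightarrow> v \<noteq> [] \<Longrightarrow> (w @ [\<sigma>] \<in> L \<or> v @ [\<sigma>] \<in> L) \<Longrightarrow>
        Tm M u p r (w @ [\<sigma>]) (v @ [\<sigma>]) i j = Tm M u p r w v i j"
    using assms(5)[unfolded RC_def, THEN conjunct2, THEN conjunct2, THEN conjunct2, THEN conjunct2, THEN conjunct2, THEN conjunct2, THEN conjunct1] by blast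
  have R10: "\<And>w v i j. w \<noteq> [] \<Longrightarrow> v \<noteq> [] \<Longrightarrow> (w \<notin> L \<or> v \<notin> L) \<Longrightarrow> Tm M u p r w v i j = 0"
    using assms(5)[unfolded RC_def, THEN conjunct2, THEN conjunct2, THEN conjunct2, THEN conjunct2, THEN conjunct2, THEN conjunct2, THEN conjunct2, THEN conjunct2, THEN conjunct2, THEN conjunct1] by blast
  have R11: "\<And>w v \<sigma> i j. w \<noteq> [] \<Longrightarrow> v \<noteq> [] \<Longrightarrow> w @ [\<sigma>] \<in> L \<Longrightarrow> v @ [\<sigma>] \<notin> L \<Longrightarrow>
        Tm M u p r v w i j = 0 \<and> Tm M u p r w v i j = 0"
    using assms(5)[unfolded RC_def, THEN conjunct2, THEN conjunct2, THEN conjunct2, THEN conjunct2, THEN conjunct2, THEN conjunct2, THEN conjunct2, THEN conjunct2, THEN conjunct2, THEN conjunct2] by blast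
  have ne: "\<And>g. g \<in> F \<Longrightarrow> fst g \<noteq> []" "\<And>g. g \<in> F \<Longrightarrow> fst g \<in> L"
    using assms(4,7) unfolding admissible_words_def by auto
  define C where "C g = c (fst g) (snd g)" for g
  define Z where "Z g x = zr u p r (fst g) t (snd g) x" for g x
  define Z' where "Z' g x = zr u p r (fst g @ [\<sigma>]) (t + 1) (snd g) x" for g x
  define T where "T g h = Tm M u p r (fst g) (fst h) (snd g) (snd h)" for g h
  define T' where "T' g h = Tm M u p r (fst g @ [\<sigma>]) (fst h @ [\<sigma>]) (snd g) (snd h)" for g h
  define A where "A = {g\<in>F. fst g @ [\<sigma>] \<in> L}"
  define B where "B = F - A"
  have ps: "p \<sigma> > 0" using assms(2) by auto
  have intZ: "\<forall>g\<in>F. \<forall>h\<in>F. integrable M (\<lambda>x. Z g x * Z h x)"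
    using ne(1) unfolding Z_def by (simp add: R4)
  have intZ': "\<forall>g\<in>F. \<forall>h\<in>F. integrable M (\<lambda>x. Z' g x * Z' h x)"
    using ne(1) unfolding Z'_def by (simp add: R4)
  have IZ: "\<And>g h. g \<in> F \<Longrightarrow> h \<in> F \<Longrightarrow> (\<integral>x. Z g x * Z h x \<partial>M) = T g h"
    using ne(1) unfolding Z_def T_def by (simp add: R4)
  have IZ': "\<And>g h. g \<in> F \<Longrightarrow> h \<in> F \<Longrightarrow> (\<integral>x. Z' g x * Z' h x \<partial>M) = T' g h"
    using ne(1) unfolding Z'_def T'_def by (simp add: R4)
  have zsum: "\<And>x. x \<in> space M \<Longrightarrow> z x = (\<Sum>g\<in>F. C g * Z g x)"
    using assms(8) by (simp add: C_def Z_def split_def)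
  have zu: "\<And>x. x \<in> space M \<Longrightarrow> z x * u \<sigma> t x = sqrt (p \<sigma>) * (\<Sum>g\<in>F. C g * Z' g x)"
  proof -
    fix x assume x: "x \<in> space M"
    have "\<And>g. Z g x * u \<sigma> t x = sqrt (p \<sigma>) * Z' g x"
      using ps unfolding Z_def Z'_def zr_snoc by simp
    then show "z x * u \<sigma> t x = sqrt (p \<sigma>) * (\<Sum>g\<in>F. C g * Z' g x)"
      using zsum[OF x] by (simp add: sum_distrib_left sum_distrib_right algebra_simps)
  qed
  have sq1: "\<And>x. x \<in> space M \<Longrightarrow> (z x)\<^sup>2 = (\<Sum>g\<in>F. C g * Z g x) * (\<Sum>g\<in>F. C g * Z g x)"
    using zsum by (simp add: power2_eq_square)
  have sq2: "\<And>x. x \<in> space M \<Longrightarrow> (z x)\<^sup>2 * (u \<sigma> t x)\<^sup>2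
      = p \<sigma> * ((\<Sum>g\<in>F. C g * Z' g x) * (\<Sum>g\<in>F. C g * Z' g x))"
  proof -
    fix x assume x: "x \<in> space M"
    have "(z x)\<^sup>2 * (u \<sigma> t x)\<^sup>2 = (z x * u \<sigma> t x)\<^sup>2" by (simp add: power_mult_distrib)
    also have "\<dots> = p \<sigma> * ((\<Sum>g\<in>F. C g * Z' g x) * (\<Sum>g\<in>F. C g * Z' g x))"
      using zu[OF x] ps by (simp add: power_mult_distrib power2_eq_square[symmetric])
    finally show "?thesis x" .
  qed
  have i1: "integrable M (\<lambda>x. (z x)\<^sup>2)"
    using bil(1)[OF assms(6) assms(6) intZ, of C C]
    by (rule int_cong_helper) (simp add: sq1)
  have e1: "(\<integral>x. (z x)\<^sup>2 \<partial>M) = (\<Sum>g\<in>F. \<Sum>h\<in>F. C g * C h * T g h)"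
    using bil(2)[OF assms(6) assms(6) intZ, of C C] IZ
    by (subst Bochner_Integration.integral_cong[OF refl sq1]) auto
  have i2: "integrable M (\<lambda>x. (z x)\<^sup>2 * (u \<sigma> t x)\<^sup>2)"
    using Bochner_Integration.integrable_mult_right[OF bil(1)[OF assms(6) assms(6) intZ', of C C], of "p \<sigma>"]
    by (rule int_cong_helper) (simp add: sq2)
  have e2: "(\<integral>x. (z x)\<^sup>2 * (u \<sigma> t x)\<^sup>2 \<partial>M) = p \<sigma> * (\<Sum>g\<in>F. \<Sum>h\<in>F. C g * C h * T' g h)"
    using bil(2)[OF assms(6) assms(6) intZ', of C C] IZ'
    by (subst Bochner_Integration.integral_cong[OF refl sq2]) auto
  have T'eq: "\<And>g h. g \<in> F \<Longrightarrow> h \<in> F \<Longrightarrow> T' g h = (if g \<in> A \<and> h \<in> A then T g h else 0)"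
  proof -
    fix g h assume g: "g \<in> F" and h: "h \<in> F"
    note ng = ne(1)[OF g] and nh = ne(1)[OF h]
    show "T' g h = (if g \<in> A \<and> h \<in> A then T g h else 0)"
    proof (cases "g \<in> A"; cases "h \<in> A")
      assume "g \<in> A" "h \<in> A" then show ?thesis
        using R7[OF ng nh, of \<sigma>] unfolding T'_def T_def A_def by auto
    next
      assume a: "g \<in> A" "h \<notin> A"
      then have "T' g h = T g h" using R7[OF ng nh, of \<sigma>] unfolding T'_def T_def A_def by auto
      moreover have "T g h = 0" using R11[OF ng nh, of \<sigma>] a h unfolding T_def A_def by auto
      ultimately show ?thesis using a by simp
    next
      assume a: "g \<notin> A" "h \<in> A"
      then have "T' g h = T g h" using R7[OF ng nh, of \<sigma>] unfolding T'_def T_def A_def by auto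
      moreover have "T g h = 0" using R11[OF nh ng, of \<sigma>] a g unfolding T_def A_def by auto
      ultimately show ?thesis using a by simp
    next
      assume a: "g \<notin> A" "h \<notin> A"
      then have "T' g h = 0" using R10[of "fst g @ [\<sigma>]" "fst h @ [\<sigma>]"] g unfolding T'_def A_def by auto
      then show ?thesis using a by simp
    qed
  qed
  have cross: "\<And>g h. g \<in> A \<Longrightarrow> h \<in> B \<Longrightarrow> T g h = 0 \<and> T h g = 0"
    using R11 ne(1) unfolding T_def A_def B_def by auto
  have AF: "A \<subseteq> F" "finite A" "finite B" "A \<union> B = F" "A \<inter> B = {}"
    using assms(6) unfolding A_def B_def by auto
  have s2: "(\<Sum>g\<in>F. \<Sum>h\<in>F. C g * C h * T' g h) = (\<Sum>g\<in>A. \<Sum>h\<in>A. C g * C h * T g h)"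
  proof -
    have "(\<Sum>g\<in>F. \<Sum>h\<in>F. C g * C h * T' g h)
        = (\<Sum>g\<in>F. \<Sum>h\<in>F. if g \<in> A then (if h \<in> A then C g * C h * T g h else 0) else 0)"
      by (intro sum.cong refl) (simp add: T'eq)
    also have "\<dots> = (\<Sum>g\<in>A. \<Sum>h\<in>F. if g \<in> A then (if h \<in> A then C g * C h * T g h else 0) else 0)"
      using AF assms(6) by (intro sum.mono_neutral_right) auto
    also have "\<dots> = (\<Sum>g\<in>A. \<Sum>h\<in>A. if g \<in> A then (if h \<in> A then C g * C h * T g h else 0) else 0)"
      using AF assms(6) by (intro sum.cong refl sum.mono_neutral_right) auto
    also have "\<dots> = (\<Sum>g\<in>A. \<Sum>h\<in>A. C g * C h * T g h)"
      by simp
    finally show ?thesis .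
  qed
  have s1: "(\<Sum>g\<in>F. \<Sum>h\<in>F. C g * C h * T g h)
      = (\<Sum>g\<in>A. \<Sum>h\<in>A. C g * C h * T g h) + (\<Sum>g\<in>B. \<Sum>h\<in>B. C g * C h * T g h)"
  proof -
    have "(\<Sum>g\<in>F. \<Sum>h\<in>F. C g * C h * T g h)
       = (\<Sum>g\<in>A. \<Sum>h\<in>A. C g * C h * T g h) + (\<Sum>g\<in>A. \<Sum>h\<in>B. C g * C h * T g h)
        + ((\<Sum>g\<in>B. \<Sum>h\<in>A. C g * C h * T g h) + (\<Sum>g\<in>B. \<Sum>h\<in>B. C g * C h * T g h))"
    proof -
      have U: "\<And>f. sum f F = sum f A + sum f B"
        using AF by (metis sum.union_disjoint)
      show ?thesis by (simp only: U sum.distrib add_ac)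
    qed
    moreover have "(\<Sum>g\<in>A. \<Sum>h\<in>B. C g * C h * T g h) = 0"
      using cross by (intro sum.neutral ballI) simp
    moreover have "(\<Sum>g\<in>B. \<Sum>h\<in>A. C g * C h * T g h) = 0"
      using cross by (intro sum.neutral ballI) simp
    ultimately show ?thesis by simp
  qed
  have nnB: "(\<Sum>g\<in>B. \<Sum>h\<in>B. C g * C h * T g h) \<ge> 0"
  proof -
    have BF: "\<forall>g\<in>B. \<forall>h\<in>B. integrable M (\<lambda>x. Z g x * Z h x)"
      using intZ AF by auto
    have "(\<Sum>g\<in>B. \<Sum>h\<in>B. C g * C h * T g h)
        = (\<integral>x. (\<Sum>g\<in>B. C g * Z g x) * (\<Sum>h\<in>B. C h * Z h x) \<partial>M)"
      unfolding bil(2)[OF AF(3) AF(3) BF, of C C]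
      by (intro sum.cong refl) (use IZ AF B_def in auto)
    also have "\<dots> \<ge> 0" by (intro integral_nonneg_AE) simp
    finally show ?thesis .
  qed
  have ineq: "(\<integral>x. (z x)\<^sup>2 * (u \<sigma> t x)\<^sup>2 \<partial>M) \<le> p \<sigma> * (\<integral>x. (z x)\<^sup>2 \<partial>M)"
    unfolding e1 e2 s1 s2 using nnB ps by (simp add: distrib_left)
  have n1: "(\<integral>\<^sup>+x. ennreal ((z x)\<^sup>2 * (u \<sigma> t x)\<^sup>2) \<partial>M) = ennreal (\<integral>x. (z x)\<^sup>2 * (u \<sigma> t x)\<^sup>2 \<partial>M)"
    using i2 by (intro nn_integral_eq_integral) auto
  have n2: "(\<integral>\<^sup>+x. ennreal ((z x)\<^sup>2) \<partial>M) = ennreal (\<integral>x. (z x)\<^sup>2 \<partial>M)"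
    using i1 by (intro nn_integral_eq_integral) auto
  show ?thesis unfolding n1 n2 using ineq ps
    by (simp add: ennreal_mult[symmetric] ennreal_leI)
qed

end
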